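(* Let $1<p\le2$ and let $\phi$ be an Orlicz function with $\alpha_\phi>0$. If the Orlicz space $L_\phi$ has type $p$, then $\phi$ satisfies condition $\Delta_2$.
   Context: $(\Omega,\Sigma,\mu)$ is one of: (A) a non-atomic measure space with $\mu(\Omega)=\infty$; (B) a non-atomic measure space with $\mu(\Omega)<\infty$; (C) $\mathbb{N}$ with counting measure. Growth conditions and indices are taken for all arguments in case (A), for large arguments in case (B), and for small arguments in case (C). An Orlicz function is $\phi:[0,\infty)\to[0,\infty)$ with $\phi(0)=0$, strictly increasing, continuous, $\lim_{u\to\infty}\phi(u)=\infty$. $\phi\in\Delta_2$ means there exist $K>0$ (and $v\ge0$ in case (B), $v>0$ in case (C)) with $\phi(2u)\le K\phi(u)$ for all $u\ge0$ (A), $u\ge v$ (B), $u\le v$ (C). $\alpha_\phi=\sup\{r:\exists c>0$ (and $v$) with $\phi(au)\ge ca^r\phi(u)$ for all $a\ge1$ and $u\ge0$ (A), $u\ge v$ (B), $0<u\le au\le v$ (C)$\}$. $L_\phi$ is the set of measurable $f$ with $\int\phi(\lambda|f|)\,d\mu<\infty$ for some $\lambda>0$, quasi-normed by $\|f\|=\inf\{\varepsilon>0:\int\phi(|f|/\varepsilon)\,d\mu\le1\}$. With Rademacher functions $r_k(t)=\operatorname{sign}(\sin2^k\pi t)$, a quasi-Banach space $X$ has type $p$ if there is $K>0$ with $\int_0^1\|\sum_{k=1}^n r_k(t)x_k\|\,dt\le K(\sum_{k=1}^n\|x_k\|^p)^{1/p}$ for all $x_1,\dots,x_n\in X$. *)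

theory Defs
  imports "HOL-Analysis.Analysis"
begin

datatype msetting = CaseA | CaseB | CaseC

definition is_atom :: "'a measure \<Rightarrow> 'a set \<Rightarrow> bool" where
  "is_atom M A \<longleftrightarrow> A \<in> sets M \<and> 0 < emeasure M A \<and>
     (\<forall>B\<in>sets M. B \<subseteq> A \<longrightarrow> emeasure M B = 0 \<or> emeasure M (A - B) = 0)"

definition nonatomic :: "'a measure \<Rightarrow> bool" where
  "nonatomic M \<longleftrightarrow> (\<nexists>A. is_atom M A)"

definition measure_setting :: "msetting \<Rightarrow> 'a measure \<Rightarrow> bool" where
  "measure_setting s M = (case s of
      CaseA \<Rightarrow> nonatomic M \<and> sigma_finite_measure M \<and> emeasure M (space M) = \<infinity>
    | CaseB \<Rightarrow> nonatomic M \<and> 0 < emeasure M (space M) \<and> emeasure M (space M) < \<infinity>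
    | CaseC \<Rightarrow> M = count_space (space M) \<and> infinite (space M) \<and> countable (space M))"

definition orlicz_function :: "(real \<Rightarrow> real) \<Rightarrow> bool" where
  "orlicz_function \<phi> \<longleftrightarrow> \<phi> 0 = 0 \<and> (\<forall>u\<ge>0. 0 \<le> \<phi> u) \<and> strict_mono_on {0..} \<phi> \<and>
     continuous_on {0..} \<phi> \<and> filterlim \<phi> at_top at_top"

definition delta2 :: "msetting \<Rightarrow> (real \<Rightarrow> real) \<Rightarrow> bool" where
  "delta2 s \<phi> = (case s of
      CaseA \<Rightarrow> (\<exists>K>0. \<forall>u\<ge>0. \<phi> (2*u) \<le> K * \<phi> u)
    | CaseB \<Rightarrow> (\<exists>K>0. \<exists>v\<ge>0. \<forall>u\<ge>v. \<phi> (2*u) \<le> K * \<phi> u)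
    | CaseC \<Rightarrow> (\<exists>K>0. \<exists>v>0. \<forall>u. 0 \<le> u \<and> u \<le> v \<longrightarrow> \<phi> (2*u) \<le> K * \<phi> u))"

definition alpha_set :: "msetting \<Rightarrow> (real \<Rightarrow> real) \<Rightarrow> real set" where
  "alpha_set s \<phi> = {r. \<exists>c>0. (case s of
      CaseA \<Rightarrow> (\<forall>a\<ge>1. \<forall>u\<ge>0. \<phi> (a*u) \<ge> c * a powr r * \<phi> u)
    | CaseB \<Rightarrow> (\<exists>v\<ge>0. \<forall>a\<ge>1. \<forall>u\<ge>v. \<phi> (a*u) \<ge> c * a powr r * \<phi> u)
    | CaseC \<Rightarrow> (\<exists>v>0. \<forall>a\<ge>1. \<forall>u. 0 < u \<and> a*u \<le> v \<longrightarrow> \<phi> (a*u) \<ge> c * a powr r * \<phi> u))}"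

definition alpha_idx :: "msetting \<Rightarrow> (real \<Rightarrow> real) \<Rightarrow> ereal" where
  "alpha_idx s \<phi> = Sup (ereal ` alpha_set s \<phi>)"

definition orlicz_space :: "'a measure \<Rightarrow> (real \<Rightarrow> real) \<Rightarrow> ('a \<Rightarrow> real) set" where
  "orlicz_space M \<phi> = {f \<in> borel_measurable M.
      \<exists>c>0. (\<integral>\<^sup>+ x. ennreal (\<phi> (c * \<bar>f x\<bar>)) \<partial>M) < \<infinity>}"

definition orlicz_norm :: "'a measure \<Rightarrow> (real \<Rightarrow> real) \<Rightarrow> ('a \<Rightarrow> real) \<Rightarrow> real" where
  "orlicz_norm M \<phi> f = Inf {\<epsilon>. \<epsilon> > 0 \<and> (\<integral>\<^sup>+ x. ennreal (\<phi> (\<bar>f x\<bar> / \<epsilon>)) \<partial>M) \<le> 1}"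

definition rademacher :: "nat \<Rightarrow> real \<Rightarrow> real" where
  "rademacher k t = sgn (sin (2 ^ k * pi * t))"

definition orlicz_has_type :: "'a measure \<Rightarrow> (real \<Rightarrow> real) \<Rightarrow> real \<Rightarrow> bool" where
  "orlicz_has_type M \<phi> p \<longleftrightarrow> (\<exists>K>0. \<forall>n::nat. \<forall>x::nat \<Rightarrow> 'a \<Rightarrow> real.
      (\<forall>k\<in>{1..n}. x k \<in> orlicz_space M \<phi>) \<longrightarrow>
      (\<integral>\<^sup>+ t\<in>{0..1}. ennreal (orlicz_norm M \<phi> (\<lambda>\<omega>. \<Sum>k=1..n. rademacher k t * x k \<omega>)) \<partial>lborel)
        \<le> ennreal (K * (\<Sum>k=1..n. orlicz_norm M \<phi> (x k) powr p) powr (1/p)))"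

end

theory Submission
  imports Defs
begin


lemma orl_basic:
  assumes "orlicz_function \<phi>"
  shows "\<phi> 0 = 0" "\<And>u. 0 \<le> u \<Longrightarrow> 0 \<le> \<phi> u"
    "\<And>x y. 0 \<le> x \<Longrightarrow> x < y \<Longrightarrow> \<phi> x < \<phi> y"
    "\<And>x y. 0 \<le> x \<Longrightarrow> x \<le> y \<Longrightarrow> \<phi> x \<le> \<phi> y"
    "\<And>u. 0 < u \<Longrightarrow> 0 < \<phi> u"
proof -
  have sm: "strict_mono_on {0..} \<phi>" using assms by (simp add: orlicz_function_def)
  show "\<phi> 0 = 0" using assms by (simp add: orlicz_function_def)
  show "\<And>u. 0 \<le> u \<Longrightarrow> 0 \<le> \<phi> u" using assms by (simp add: orlicz_function_def)
  show lt: "\<And>x y. 0 \<le> x \<Longrightarrow> x < y \<Longrightarrow> \<phi> x < \<phi> y"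
    using sm by (auto simp: strict_mono_on_def)
  show "\<And>x y. 0 \<le> x \<Longrightarrow> x \<le> y \<Longrightarrow> \<phi> x \<le> \<phi> y"
    using lt by (metis order_le_less)
  show "\<And>u. 0 < u \<Longrightarrow> 0 < \<phi> u"
    using lt[of 0] \<open>\<phi> 0 = 0\<close> by fastforce
qed

lemma small_subset:
  assumes na: "nonatomic M" and F: "F \<in> fmeasurable M" and pos: "0 < measure M F"
  shows "\<exists>G\<in>fmeasurable M. G \<subseteq> F \<and> 0 < measure M G \<and> measure M G \<le> measure M F / 2 ^ k"
proof (induction k)
  case 0
  then show ?case using F pos by auto
next
  case (Suc k)
  then obtain G where G: "G \<in> fmeasurable M" "G \<subseteq> F" "0 < measure M G" "measure M G \<le> measure M F / 2 ^ k"
    by blast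
  have "\<not> is_atom M G" using na by (simp add: nonatomic_def)
  moreover have "G \<in> sets M" "0 < emeasure M G" using G
    by (auto simp: emeasure_eq_measure2)
  ultimately have "\<exists>B\<in>sets M. B \<subseteq> G \<and> emeasure M B \<noteq> 0 \<and> emeasure M (G - B) \<noteq> 0"
    unfolding is_atom_def by simp
  then obtain B where B: "B \<in> sets M" "B \<subseteq> G" "emeasure M B \<noteq> 0" "emeasure M (G - B) \<noteq> 0"
    by blast
  have Bf: "B \<in> fmeasurable M" "G - B \<in> fmeasurable M"
    using fmeasurableI2[OF G(1) B(2) B(1)] fmeasurableI2[OF G(1), of "G - B"] B(1) G(1) by auto
  have Bp: "0 < measure M B" "0 < measure M (G - B)"
    using B Bf by (auto simp: emeasure_eq_measure2 zero_less_measure_iff)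
  have sum: "measure M G = measure M B + measure M (G - B)"
    using measure_Diff[of M G B] B(1,2) G(1) fmeasurableD2[OF G(1)] by auto
  have key: "X \<le> measure M G / 2 \<Longrightarrow> X \<le> measure M F / 2 ^ Suc k" for X
  proof -
    assume "X \<le> measure M G / 2"
    also have "... \<le> (measure M F / 2 ^ k) / 2" using G(4) by (intro divide_right_mono) auto
    also have "... = measure M F / 2 ^ Suc k" by simp
    finally show ?thesis .
  qed
  show ?case
  proof (cases "measure M B \<le> measure M G / 2")
    case True
    have "B \<subseteq> F" using B G by blast
    then show ?thesis using Bf(1) Bp(1) key[OF True] by blast
  next
    case False
    then have "measure M (G - B) \<le> measure M G / 2" using sum by linarith
    have "G - B \<subseteq> F" using B G by blast
    then show ?thesis using Bf(2) Bp(2) key[OF \<open>measure M (G - B) \<le> measure M G / 2\<close>] by blast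
  qed
qed

lemma small_subset_delta:
  assumes na: "nonatomic M" and F: "F \<in> fmeasurable M" and pos: "0 < measure M F" and d: "0 < d"
  shows "\<exists>G\<in>fmeasurable M. G \<subseteq> F \<and> 0 < measure M G \<and> measure M G \<le> d"
proof -
  obtain k where k: "measure M F / d < 2 ^ k" using real_arch_pow[of 2 "measure M F / d"] by auto
  then have "measure M F / 2 ^ k \<le> d" using d by (simp add: field_simps)
  moreover obtain G where "G\<in>fmeasurable M" "G \<subseteq> F" "0 < measure M G" "measure M G \<le> measure M F / 2 ^ k"
    using small_subset[OF na F pos, of k] by blast
  ultimately show ?thesis by (intro bexI[of _ G]) auto
qed



lemma split_interval:
  assumes na: "nonatomic M" and E: "E \<in> fmeasurable M" and a: "0 < a" and big: "2*a \<le> measure M E"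
  shows "\<exists>B\<in>sets M. B \<subseteq> E \<and> a \<le> measure M B \<and> measure M B \<le> 2*a"
proof (rule ccontr)
  assume neg: "\<not> ?thesis"
  have dich: "measure M B < a \<or> 2*a < measure M B" if "B \<in> sets M" "B \<subseteq> E" for B
    using neg that by force
  define GG where "GG = {G\<in>sets M. G \<subseteq> E \<and> measure M G < a}"
  have fin: "G \<in> fmeasurable M" if "G \<subseteq> E" "G \<in> sets M" for G
    using fmeasurableI2[OF E that] .
  have emp: "{} \<in> GG" using a by (simp add: GG_def)
  have un: "G1 \<union> G2 \<in> GG" if "G1 \<in> GG" "G2 \<in> GG" for G1 G2
  proof -
    have s: "G1 \<in> sets M" "G2 \<in> sets M" "G1 \<subseteq> E" "G2 \<subseteq> E" "measure M G1 < a" "measure M G2 < a"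
      using that by (auto simp: GG_def)
    have "measure M (G1 \<union> G2) \<le> measure M G1 + measure M G2"
      by (rule measure_Un_le) (use s in auto)
    then have "measure M (G1 \<union> G2) < a"
      using dich[of "G1 \<union> G2"] s by auto
    then show ?thesis using s by (auto simp: GG_def)
  qed
  have finun: "(\<Union>i<k. G i) \<in> GG" if "\<And>i. G i \<in> GG" for G :: "nat \<Rightarrow> 'a set" and k
  proof (induction k)
    case 0
    then show ?case using emp by simp
  next
    case (Suc k)
    have "(\<Union>i<Suc k. G i) = G k \<union> (\<Union>i<k. G i)" by (simp add: lessThan_Suc)
    then show ?case using un[OF that Suc] by simp
  qed
  have cun: "(\<Union>i. G i) \<in> GG" if G: "\<And>i. G i \<in> GG" for G :: "nat \<Rightarrow> 'a set"
  proof -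
    define V where "V k = (\<Union>i<k. G i)" for k
    have VG: "V k \<in> GG" for k using finun[OF G] by (simp add: V_def)
    have inc: "incseq V" unfolding incseq_def V_def by (intro allI impI UN_mono) auto
    have rs: "range V \<subseteq> sets M" using VG by (auto simp: GG_def)
    have UV: "(\<Union>k. V k) = (\<Union>i. G i)" unfolding V_def by auto
    have sub: "(\<Union>i. G i) \<subseteq> E" "(\<Union>i. G i) \<in> sets M" using G by (auto simp: GG_def)
    have "emeasure M (\<Union>i. G i) = (SUP k. emeasure M (V k))"
      using SUP_emeasure_incseq[OF rs inc] UV by simp
    also have "\<dots> \<le> ennreal a"
    proof (rule SUP_least)
      fix k
      have "V k \<in> fmeasurable M" using VG fin by (auto simp: GG_def)
      then have "emeasure M (V k) = ennreal (measure M (V k))" by (simp add: emeasure_eq_measure2)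
      moreover have "measure M (V k) < a" using VG by (auto simp: GG_def)
      ultimately show "emeasure M (V k) \<le> ennreal a" by (simp add: ennreal_leI)
    qed
    finally have "ennreal (measure M (\<Union>i. G i)) \<le> ennreal a"
      using fin[OF sub] by (simp add: emeasure_eq_measure2)
    then have "measure M (\<Union>i. G i) \<le> a" using a by simp
    then have "measure M (\<Union>i. G i) < a" using dich[OF sub(2,1)] a by auto
    then show ?thesis using sub by (simp add: GG_def)
  qed
  define s where "s = Sup (measure M ` GG)"
  have ne: "measure M ` GG \<noteq> {}" using emp by auto
  have bdd: "bdd_above (measure M ` GG)" by (rule bdd_aboveI[of _ a]) (auto simp: GG_def)
  have upper: "measure M G \<le> s" if "G \<in> GG" for G
    unfolding s_def using that bdd by (intro cSup_upper) auto
  have "\<exists>G\<in>GG. s - 1 / real (Suc i) < measure M G" for i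
  proof -
    have "s - 1 / real (Suc i) < s" by simp
    then show ?thesis unfolding s_def using less_cSup_iff[OF ne bdd] by auto
  qed
  then obtain G where G: "\<And>i. G i \<in> GG" "\<And>i. s - 1 / real (Suc i) < measure M (G i)"
    by metis
  define V where "V = (\<Union>i. G i)"
  have VG: "V \<in> GG" unfolding V_def by (rule cun[OF G(1)])
  have Vs: "V \<in> sets M" "V \<subseteq> E" "measure M V < a" using VG by (auto simp: GG_def)
  have Vf: "V \<in> fmeasurable M" using fin[OF Vs(2) Vs(1)] .
  have ge: "measure M (G i) \<le> measure M V" for i
  proof -
    have "G i \<subseteq> V" unfolding V_def by auto
    moreover have "G i \<in> sets M" using G(1)[of i] by (auto simp: GG_def)
    ultimately show ?thesis using measure_mono_fmeasurable Vf by blast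
  qed
  have "s \<le> measure M V"
  proof (rule ccontr)
    assume "\<not> s \<le> measure M V"
    then have "0 < s - measure M V" by simp
    then obtain i where "inverse (real (Suc i)) < s - measure M V"
      using reals_Archimedean by blast
    then show False using G(2)[of i] ge[of i] unfolding inverse_eq_divide by linarith
  qed
  then have Vm: "measure M V = s" using upper[OF VG] by simp
  have Ef: "E \<in> sets M" "emeasure M E \<noteq> \<infinity>" using E by (auto simp: fmeasurableD2)
  have ED: "measure M (E - V) = measure M E - measure M V"
    using measure_Diff[of M E V] Ef Vs by auto
  have EDf: "E - V \<in> fmeasurable M" using fin[of "E - V"] Ef(1) Vs(1) by blast
  have "0 < measure M (E - V)" using ED Vs big a by linarith
  then obtain H where H: "H \<in> fmeasurable M" "H \<subseteq> E - V" "0 < measure M H" "measure M H \<le> a"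
    using small_subset_delta[OF na EDf _ a] by blast
  have Hs: "H \<in> sets M" using H by auto
  have "measure M (V \<union> H) = measure M V + measure M H"
    by (rule measure_Union) (use Vf H fmeasurableD2 Vs Hs in auto)
  moreover have "V \<union> H \<in> sets M" "V \<union> H \<subseteq> E" using Vs Hs H by auto
  ultimately have "measure M (V \<union> H) < a"
    using dich[of "V \<union> H"] Vs H by auto
  then have "V \<union> H \<in> GG" using \<open>V \<union> H \<in> sets M\<close> \<open>V \<union> H \<subseteq> E\<close> by (simp add: GG_def)
  then have "measure M (V \<union> H) \<le> s" by (rule upper)
  then show False using \<open>measure M (V \<union> H) = measure M V + measure M H\<close> Vm H by simp
qed

lemma pieces:
  assumes na: "nonatomic M" and E: "E \<in> fmeasurable M" and a: "0 < a"
  shows "2*a*real m \<le> measure M E \<Longrightarrow> \<exists>A. (\<forall>j<m. A j \<in> sets M \<and> A j \<subseteq> E \<and> a \<le> measure M (A j)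
      \<and> measure M (A j) \<le> 2*a) \<and> disjoint_family_on A {..<m}"
proof (induction m)
  case 0
  show ?case by (rule exI[of _ "\<lambda>_. {}"]) (simp add: disjoint_family_on_def)
next
  case (Suc m)
  have eq: "2*a*real (Suc m) = 2*a + 2*a*real m" by (simp add: algebra_simps)
  have "2*a*real m \<le> measure M E"
    using a Suc.prems eq by linarith
  then obtain A where A: "\<And>j. j<m \<Longrightarrow> A j \<in> sets M \<and> A j \<subseteq> E \<and> a \<le> measure M (A j) \<and> measure M (A j) \<le> 2*a"
    and dA: "disjoint_family_on A {..<m}" using Suc.IH by blast
  define W where "W = (\<Union>j<m. A j)"
  have Ws: "W \<in> sets M" "W \<subseteq> E" using A by (auto simp: W_def)
  have "measure M W \<le> (\<Sum>j<m. measure M (A j))"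
    unfolding W_def by (rule measure_UNION_le) (use A in auto)
  also have "\<dots> \<le> real (card {..<m}) * (2*a)"
    by (rule sum_bounded_above) (use A in auto)
  finally have Wm: "measure M W \<le> 2*a*real m" by (simp add: mult_ac)
  have Ef: "E \<in> sets M" "emeasure M E \<noteq> \<infinity>" using E by (auto simp: fmeasurableD2)
  have ED: "measure M (E - W) = measure M E - measure M W"
    using measure_Diff[of M E W] Ef Ws by auto
  have EDf: "E - W \<in> fmeasurable M" using fmeasurableI2[OF E, of "E - W"] Ef Ws by auto
  have "2*a \<le> measure M (E - W)" using ED Wm Suc.prems by (simp add: algebra_simps)
  then obtain B where B: "B \<in> sets M" "B \<subseteq> E - W" "a \<le> measure M B" "measure M B \<le> 2*a"
    using split_interval[OF na EDf a] by blast
  define A' where "A' = A(m := B)"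
  have "\<forall>j<Suc m. A' j \<in> sets M \<and> A' j \<subseteq> E \<and> a \<le> measure M (A' j) \<and> measure M (A' j) \<le> 2*a"
  proof (intro allI impI)
    fix j assume j: "j < Suc m"
    show "A' j \<in> sets M \<and> A' j \<subseteq> E \<and> a \<le> measure M (A' j) \<and> measure M (A' j) \<le> 2*a"
    proof (cases "j = m")
      case True
      then have "A' j = B" by (simp add: A'_def)
      then show ?thesis using B by blast
    next
      case False
      then have "A' j = A j" "j < m" using j by (simp_all add: A'_def)
      then show ?thesis using A[of j] by simp
    qed
  qed
  moreover have "disjoint_family_on A' {..<Suc m}"
    unfolding disjoint_family_on_def
  proof (intro ballI impI)
    fix i j assume ij: "i \<in> {..<Suc m}" "j \<in> {..<Suc m}" "i \<noteq> j"
    have BW: "B \<inter> A k = {}" if "k < m" for k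
      using B(2) that unfolding W_def by blast
    show "A' i \<inter> A' j = {}"
    proof (cases "i = m")
      case True
      then have "j < m" "A' i = B" "A' j = A j" using ij by (auto simp: A'_def)
      then show ?thesis using BW by simp
    next
      case False
      note iF = False
      show ?thesis
      proof (cases "j = m")
        case True
        then have "i < m" "A' j = B" "A' i = A i" using ij iF by (auto simp: A'_def)
        then show ?thesis using BW by blast
      next
        case False
        then have "i < m" "j < m" "A' j = A j" "A' i = A i" using ij iF by (auto simp: A'_def)
        then show ?thesis using dA ij(3) unfolding disjoint_family_on_def by simp
      qed
    qed
  qed
  ultimately show ?case by blast
qed



definition oset :: "'a measure \<Rightarrow> (real \<Rightarrow> real) \<Rightarrow> ('a \<Rightarrow> real) \<Rightarrow> real set" where
  "oset M \<phi> f = {\<epsilon>. \<epsilon> > 0 \<and> (\<integral>\<^sup>+ x. ennreal (\<phi> (\<bar>f x\<bar> / \<epsilon>)) \<partial>M) \<le> 1}"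

lemma onorm_oset: "orlicz_norm M \<phi> f = Inf (oset M \<phi> f)"
  by (simp add: orlicz_norm_def oset_def)

lemma norm_le:
  assumes "e \<in> oset M \<phi> f"
  shows "0 \<le> orlicz_norm M \<phi> f" "orlicz_norm M \<phi> f \<le> e"
proof -
  have bdd: "bdd_below (oset M \<phi> f)" by (rule bdd_belowI[of _ 0]) (auto simp: oset_def)
  show "orlicz_norm M \<phi> f \<le> e" unfolding onorm_oset using cInf_lower[OF assms bdd] .
  show "0 \<le> orlicz_norm M \<phi> f" unfolding onorm_oset
    using assms by (intro cInf_greatest) (auto simp: oset_def)
qed

lemma upper_mem:
  assumes orl: "orlicz_function \<phi>" and e: "0 < e" and U: "U \<in> sets M"
    and eU: "emeasure M U = ennreal mU" and B: "0 \<le> B"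
    and pw: "\<And>\<omega>. \<bar>f \<omega>\<bar> \<le> B * indicator U \<omega>" and small: "\<phi> (B / e) * mU \<le> 1" and mU: "0 \<le> mU"
  shows "e \<in> oset M \<phi> f"
proof -
  note ob = orl_basic[OF orl]
  have "(\<integral>\<^sup>+ x. ennreal (\<phi> (\<bar>f x\<bar> / e)) \<partial>M) \<le> (\<integral>\<^sup>+ x. ennreal (\<phi> (B / e)) * indicator U x \<partial>M)"
  proof (rule nn_integral_mono)
    fix x
    show "ennreal (\<phi> (\<bar>f x\<bar> / e)) \<le> ennreal (\<phi> (B / e)) * indicator U x"
    proof (cases "x \<in> U")
      case True
      then have "\<bar>f x\<bar> \<le> B" using pw[of x] by simp
      then have "\<bar>f x\<bar> / e \<le> B / e" using e by (simp add: divide_right_mono)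
      then have "\<phi> (\<bar>f x\<bar> / e) \<le> \<phi> (B / e)" using ob(4) e by simp
      then show ?thesis using True by (simp add: ennreal_leI)
    next
      case False
      then have "f x = 0" using pw[of x] by simp
      then show ?thesis using ob(1) by simp
    qed
  qed
  also have "\<dots> = ennreal (\<phi> (B / e)) * emeasure M U" using U by (rule nn_integral_cmult_indicator)
  also have "\<dots> = ennreal (\<phi> (B / e) * mU)" using eU mU by (simp add: ennreal_mult'')
  also have "\<dots> \<le> 1" using small by simp
  finally show ?thesis using e by (simp add: oset_def)
qed

lemma lower_norm:
  assumes orl: "orlicz_function \<phi>" and L: "0 < L" and h: "0 < h" and A: "A \<in> sets M"
    and eA: "emeasure M A = ennreal (measure M A)" and big: "1 \<le> \<phi> h * measure M A"
    and pw: "\<And>\<omega>. \<omega> \<in> A \<Longrightarrow> L * h \<le> \<bar>f \<omega>\<bar>" and ne: "e0 \<in> oset M \<phi> f"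
  shows "L \<le> orlicz_norm M \<phi> f"
  unfolding onorm_oset
proof (rule cInf_greatest)
  show "oset M \<phi> f \<noteq> {}" using ne by auto
  fix e assume "e \<in> oset M \<phi> f"
  then have e: "0 < e" and int: "(\<integral>\<^sup>+ x. ennreal (\<phi> (\<bar>f x\<bar> / e)) \<partial>M) \<le> 1"
    by (auto simp: oset_def)
  note ob = orl_basic[OF orl]
  show "L \<le> e"
  proof (rule ccontr)
    assume "\<not> L \<le> e"
    then have eL: "e < L" by simp
    have Lh0: "0 \<le> L * h / e" using L h e by simp
    have "ennreal (\<phi> (L * h / e) * measure M A) = ennreal (\<phi> (L * h / e)) * emeasure M A"
      using eA by (simp add: ennreal_mult'')
    also have "\<dots> = (\<integral>\<^sup>+ x. ennreal (\<phi> (L * h / e)) * indicator A x \<partial>M)"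
      using A by (rule nn_integral_cmult_indicator[symmetric])
    also have "\<dots> \<le> (\<integral>\<^sup>+ x. ennreal (\<phi> (\<bar>f x\<bar> / e)) \<partial>M)"
    proof (rule nn_integral_mono)
      fix x
      show "ennreal (\<phi> (L * h / e)) * indicator A x \<le> ennreal (\<phi> (\<bar>f x\<bar> / e))"
      proof (cases "x \<in> A")
        case True
        then have "L * h / e \<le> \<bar>f x\<bar> / e" using pw[of x] e by (simp add: divide_right_mono)
        then have "\<phi> (L * h / e) \<le> \<phi> (\<bar>f x\<bar> / e)" using ob(4) Lh0 by simp
        then show ?thesis using True by (simp add: ennreal_leI)
      qed simp
    qed
    also have "\<dots> \<le> 1" by (rule int)
    finally have le1: "\<phi> (L * h / e) * measure M A \<le> 1" by simp
    have "h < L * h / e" using h e eL by (simp add: field_simps)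
    then have phlt: "\<phi> h < \<phi> (L * h / e)" using ob(3) h by simp
    have mA: "0 < measure M A"
    proof (rule ccontr)
      assume "\<not> 0 < measure M A"
      then have "measure M A = 0" using measure_nonneg[of M A] by linarith
      then show False using big by simp
    qed
    have "\<phi> h * measure M A < \<phi> (L * h / e) * measure M A"
      using phlt mA by (simp add: mult_strict_right_mono)
    then show False using big le1 by linarith
  qed
qed



lemma growth_contra:
  fixes p K :: real
  assumes p: "1 < p" and K: "0 < K"
    and H: "\<And>n::nat. 1 \<le> n \<Longrightarrow> real n \<le> K * (real n * 2 powr p) powr (1/p)"
  shows False
proof -
  define q where "q = 1 - 1/p"
  have q: "0 < q" using p by (simp add: q_def)
  define N where "N = nat \<lceil>(2*K+1) powr (1/q)\<rceil>"
  have pos: "0 < (2*K+1) powr (1/q)" using K by simp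
  have N1: "(2*K+1) powr (1/q) \<le> real N" unfolding N_def by linarith
  have "1 \<le> N" using pos unfolding N_def by linarith
  then have Npos: "0 < real N" by simp
  have "real N \<le> K * (real N * 2 powr p) powr (1/p)" using H[OF \<open>1 \<le> N\<close>] .
  also have "(real N * 2 powr p) powr (1/p) = real N powr (1/p) * (2 powr p) powr (1/p)"
    by (simp add: powr_mult)
  also have "(2 powr p) powr (1/p) = (2::real)" using p by (simp add: powr_powr)
  finally have A: "real N \<le> 2 * K * real N powr (1/p)" by (simp add: mult_ac)
  have "real N = real N powr (1/p + q)" using Npos by (simp add: q_def)
  also have "\<dots> = real N powr (1/p) * real N powr q" by (rule powr_add)
  finally have B: "real N powr (1/p) * real N powr q \<le> 2 * K * real N powr (1/p)" using A by simp
  have Np: "0 < real N powr (1/p)" using Npos by simp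
  have C: "real N powr q \<le> 2 * K" using B Np by (simp add: mult.commute)
  have "2*K+1 = ((2*K+1) powr (1/q)) powr q" using q K by (simp add: powr_powr)
  also have "\<dots> \<le> real N powr q" using N1 q pos by (intro powr_mono2) auto
  finally show False using C by simp
qed



definition good :: "'a measure \<Rightarrow> (real \<Rightarrow> real) \<Rightarrow> nat \<Rightarrow> bool" where
  "good M \<phi> n \<longleftrightarrow> (\<exists>c>0. \<exists>A::nat \<Rightarrow> 'a set.
     (\<forall>j<2^n. A j \<in> sets M \<and> emeasure M (A j) < \<infinity> \<and> 1 \<le> \<phi> c * measure M (A j)) \<and>
     disjoint_family_on A {..<2^n} \<and> \<phi> (c/2) * (\<Sum>j<2^n. measure M (A j)) \<le> 1)"

lemma sum_ind_in:
  assumes "disjoint_family_on A I" "finite I" "j0 \<in> I" "\<omega> \<in> A j0"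
  shows "(\<Sum>j\<in>I. g j * indicator (A j) \<omega>) = (g j0 :: real)"
proof -
  have "(\<Sum>j\<in>I. g j * indicator (A j) \<omega>) = g j0 * indicator (A j0) \<omega> + (\<Sum>j\<in>I - {j0}. g j * indicator (A j) \<omega>)"
    by (rule sum.remove[OF assms(2,3)])
  also have "(\<Sum>j\<in>I - {j0}. g j * indicator (A j) \<omega>) = 0"
  proof (rule sum.neutral, rule ballI)
    fix j assume j: "j \<in> I - {j0}"
    then have "A j \<inter> A j0 = {}" using assms(1,3) unfolding disjoint_family_on_def by blast
    then have "\<omega> \<notin> A j" using assms(4) by blast
    then show "g j * indicator (A j) \<omega> = 0" by simp
  qed
  finally show ?thesis using assms(4) by simp
qed

lemma rad_abs: "\<bar>rademacher k t\<bar> \<le> 1"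
  by (simp add: rademacher_def sgn_if)

lemma rad_sign:
  assumes "sin (2 ^ k * pi * t) \<noteq> 0"
  shows "rademacher k t * (if 0 < rademacher k t then 1 else -1) = 1"
  using assms by (simp add: rademacher_def sgn_if)

lemma countable_Z: "countable {t::real. \<exists>k::nat. sin (2 ^ k * pi * t) = 0}"
proof -
  have "{t::real. \<exists>k::nat. sin (2 ^ k * pi * t) = 0} \<subseteq> (\<Union>k::nat. range (\<lambda>i::int. real_of_int i / 2 ^ k))"
  proof
    fix t :: real assume "t \<in> {t::real. \<exists>k::nat. sin (2 ^ k * pi * t) = 0}"
    then obtain k :: nat where "sin (2 ^ k * pi * t) = 0" by blast
    then obtain i :: int where i: "2 ^ k * pi * t = of_int i * pi" using sin_zero_iff_int2 by blast
    then have "2 ^ k * t = of_int i" using pi_gt_zero by (simp add: mult_ac)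
    then have "t = of_int i / 2 ^ k" by (simp add: field_simps)
    then show "t \<in> (\<Union>k::nat. range (\<lambda>i::int. real_of_int i / 2 ^ k))" by blast
  qed
  moreover have "countable (\<Union>k::nat. range (\<lambda>i::int. real_of_int i / 2 ^ k))" by auto
  ultimately show ?thesis using countable_subset by blast
qed



lemma core_bound:
  fixes M :: "'a measure"
  assumes orl: "orlicz_function \<phi>" and p: "0 < p" and n: "1 \<le> n" and g: "good M \<phi> n" and K: "0 < K"
    and T: "\<forall>x::nat \<Rightarrow> 'a \<Rightarrow> real. (\<forall>k\<in>{1..n}. x k \<in> orlicz_space M \<phi>) \<longrightarrow>
      (\<integral>\<^sup>+ t\<in>{0..1}. ennreal (orlicz_norm M \<phi> (\<lambda>\<omega>. \<Sum>k=1..n. rademacher k t * x k \<omega>)) \<partial>lborel)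
        \<le> ennreal (K * (\<Sum>k=1..n. orlicz_norm M \<phi> (x k) powr p) powr (1/p))"
  shows "real n \<le> K * (real n * 2 powr p) powr (1/p)"
proof -
  note ob = orl_basic[OF orl]
  obtain c and A :: "nat \<Rightarrow> 'a set" where c: "0 < c" and Aj': "\<forall>j<2^n. A j \<in> sets M \<and> emeasure M (A j) < \<infinity> \<and> 1 \<le> \<phi> c * measure M (A j)"
    and dA: "disjoint_family_on A {..<2^n}" and small: "\<phi> (c/2) * (\<Sum>j<2^n. measure M (A j)) \<le> 1"
    using g unfolding good_def by (elim exE conjE) 
  have Aj: "A j \<in> sets M \<and> emeasure M (A j) < \<infinity> \<and> 1 \<le> \<phi> c * measure M (A j)" if "j<2^n" for j
    using Aj' that by blast
  have cardP: "card (Pow {1..n}) = 2^n" by (simp add: card_Pow)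
  obtain hh where hh: "bij_betw hh {0..<card (Pow {1..n})} (Pow {1..n})"
    using ex_bij_betw_nat_finite[of "Pow {1..n}"] by auto
  have surj: "\<exists>j<2^n. hh j = S" if "S \<subseteq> {1..n}" for S
  proof -
    have "S \<in> hh ` {0..<card (Pow {1..n})}" using hh that by (simp add: bij_betw_def)
    then show ?thesis using cardP by auto
  qed
  define \<sigma> where "\<sigma> S k = (if k \<in> S then 1 else -1 :: real)" for S :: "nat set" and k
  have abss: "\<bar>\<sigma> S k\<bar> = 1" for S k by (simp add: \<sigma>_def)
  define x where "x k \<omega> = (\<Sum>j<2^n. (\<sigma> (hh j) k * c) * indicator (A j) \<omega>)" for k \<omega>
  define U where "U = (\<Union>j<2^n. A j)"
  define mU where "mU = (\<Sum>j<2^n. measure M (A j))"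
  have Us: "U \<in> sets M" unfolding U_def using Aj by auto
  have eA: "emeasure M (A j) = ennreal (measure M (A j))" if "j < 2^n" for j
    using Aj[OF that] by (intro emeasure_eq_ennreal_measure) auto
  have mU0: "0 \<le> mU" unfolding mU_def by (simp add: sum_nonneg)
  have eU: "emeasure M U = ennreal mU"
  proof -
    have "emeasure M U = (\<Sum>j<2^n. emeasure M (A j))"
      unfolding U_def using Aj dA by (intro sum_emeasure[symmetric]) auto
    also have "\<dots> = (\<Sum>j<2^n. ennreal (measure M (A j)))" using eA by simp
    also have "\<dots> = ennreal mU" unfolding mU_def by simp
    finally show ?thesis .
  qed
  have inU: "\<exists>j0<2^n. \<omega> \<in> A j0" if "\<omega> \<in> U" for \<omega> using that unfolding U_def by blast
  have xin: "x k \<omega> = \<sigma> (hh j0) k * c" if "j0 < 2^n" "\<omega> \<in> A j0" for k \<omega> j0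
    unfolding x_def using sum_ind_in[OF dA _ _ that(2), of "\<lambda>j. \<sigma> (hh j) k * c"] that(1) by simp
  have xout: "x k \<omega> = 0" if "\<omega> \<notin> U" for k \<omega>
    unfolding x_def using that unfolding U_def by (intro sum.neutral) auto
  have xb: "\<bar>x k \<omega>\<bar> \<le> c * indicator U \<omega>" for k \<omega>
  proof (cases "\<omega> \<in> U")
    case True
    then obtain j0 where "j0 < 2^n" "\<omega> \<in> A j0" using inU by blast
    then show ?thesis using xin[of j0 \<omega> k] True c abss by (simp add: abs_mult)
  qed (simp add: xout)
  have x2: "2 \<in> oset M \<phi> (x k)" for k
    by (rule upper_mem[OF orl _ Us eU _ xb]) (use c small mU0 in \<open>auto simp: mU_def\<close>)
  have xn: "0 \<le> orlicz_norm M \<phi> (x k)" "orlicz_norm M \<phi> (x k) \<le> 2" for k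
    using norm_le[OF x2] by auto
  have xmeas: "x k \<in> borel_measurable M" for k
    unfolding x_def
    by (intro borel_measurable_sum borel_measurable_times borel_measurable_const borel_measurable_indicator)
      (use Aj in auto)
  have xsp: "x k \<in> orlicz_space M \<phi>" for k
  proof -
    have hlf: "(1/2::real) * y = y / 2" for y :: real by simp
    have "(\<integral>\<^sup>+ \<omega>. ennreal (\<phi> (1/2 * \<bar>x k \<omega>\<bar>)) \<partial>M) \<le> 1"
      using x2[of k] unfolding hlf by (simp add: oset_def)
    then have "(\<integral>\<^sup>+ \<omega>. ennreal (\<phi> (1/2 * \<bar>x k \<omega>\<bar>)) \<partial>M) < \<infinity>"
      using order.strict_trans1 by fastforce
    then show ?thesis unfolding orlicz_space_def using xmeas[of k]
      by (intro CollectI conjI exI[of _ "1/2"]) auto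
  qed
  define F where "F t \<omega> = (\<Sum>k=1..n. rademacher k t * x k \<omega>)" for t \<omega>
  have Fb: "\<bar>F t \<omega>\<bar> \<le> (real n * c) * indicator U \<omega>" for t \<omega>
  proof (cases "\<omega> \<in> U")
    case True
    then obtain j0 where j0: "j0 < 2^n" "\<omega> \<in> A j0" using inU by blast
    have "\<bar>F t \<omega>\<bar> \<le> (\<Sum>k=1..n. \<bar>rademacher k t * x k \<omega>\<bar>)"
      unfolding F_def by (rule sum_abs)
    also have "\<dots> \<le> real (card {1..n}) * c"
    proof (rule sum_bounded_above)
      fix k assume "k \<in> {1..n}"
      have "\<bar>rademacher k t * x k \<omega>\<bar> = \<bar>rademacher k t\<bar> * c"
        using xin[OF j0, of k] abss c by (simp add: abs_mult)
      also have "\<dots> \<le> 1 * c" using rad_abs[of k t] c by (intro mult_right_mono) auto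
      finally show "\<bar>rademacher k t * x k \<omega>\<bar> \<le> c" by simp
    qed
    finally show ?thesis using True by simp
  next
    case False
    then show ?thesis unfolding F_def using xout by simp
  qed
  have F2: "2 * real n \<in> oset M \<phi> (F t)" for t
  proof (rule upper_mem[OF orl _ Us eU _ Fb])
    have e: "real n * c / (2 * real n) = c / 2" using n by (simp add: field_simps)
    show "\<phi> (real n * c / (2 * real n)) * mU \<le> 1" unfolding e mU_def by (rule small)
  qed (use n c mU0 in auto)
  define Z where "Z = {t::real. \<exists>k::nat. sin (2 ^ k * pi * t) = 0}"
  have Fn: "real n \<le> orlicz_norm M \<phi> (F t)" if "t \<notin> Z" for t
  proof -
    define S where "S = {k\<in>{1..n}. 0 < rademacher k t}"
    have "S \<subseteq> {1..n}" unfolding S_def by blast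
    then obtain j0 where j0: "j0 < 2^n" "hh j0 = S" using surj[of S] by blast
    have one: "rademacher k t * \<sigma> S k = 1" if "k \<in> {1..n}" for k
    proof -
      have "sin (2 ^ k * pi * t) \<noteq> 0" using \<open>t \<notin> Z\<close> by (auto simp: Z_def)
      then show ?thesis using rad_sign[of k t] that by (simp add: \<sigma>_def S_def)
    qed
    have val: "F t \<omega> = real n * c" if "\<omega> \<in> A j0" for \<omega>
    proof -
      have "F t \<omega> = (\<Sum>k=1..n. rademacher k t * (\<sigma> S k * c))"
        unfolding F_def using xin[OF j0(1) that] j0(2) by simp
      also have "\<dots> = (\<Sum>k=1..n. c)"
        by (rule sum.cong) (use one in \<open>auto simp: mult.assoc[symmetric]\<close>)
      finally show ?thesis by simp
    qed
    show ?thesis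
    proof (rule lower_norm[OF orl _ c _ eA[OF j0(1)] _ _ F2])
      show "0 < real n" using n by simp
      show "A j0 \<in> sets M" "1 \<le> \<phi> c * measure M (A j0)" using Aj[OF j0(1)] by auto
      show "real n * c \<le> \<bar>F t \<omega>\<bar>" if "\<omega> \<in> A j0" for \<omega> using val[OF that] c by simp
    qed
  qed
  have AEZ: "AE t in lborel. t \<notin> Z"
    by (rule AE_I'[OF countable_imp_null_set_lborel[OF countable_Z]]) (auto simp: Z_def)
  have "ennreal (real n) = (\<integral>\<^sup>+ t. ennreal (real n) * indicator {0..1::real} t \<partial>lborel)"
    by (simp add: nn_integral_cmult_indicator)
  also have "\<dots> \<le> (\<integral>\<^sup>+ t. ennreal (orlicz_norm M \<phi> (F t)) * indicator {0..1::real} t \<partial>lborel)"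
  proof (rule nn_integral_mono_AE)
    show "AE t in lborel. ennreal (real n) * indicator {0..1::real} t \<le> ennreal (orlicz_norm M \<phi> (F t)) * indicator {0..1::real} t"
      using AEZ
    proof eventually_elim
      case (elim t)
      then have "ennreal (real n) \<le> ennreal (orlicz_norm M \<phi> (F t))" using Fn by (simp add: ennreal_leI)
      then show ?case by (rule mult_right_mono) simp
    qed
  qed
  also have "\<dots> \<le> ennreal (K * (\<Sum>k=1..n. orlicz_norm M \<phi> (x k) powr p) powr (1/p))"
    using T[rule_format, of x] xsp unfolding F_def by simp
  finally have I: "ennreal (real n) \<le> ennreal (K * (\<Sum>k=1..n. orlicz_norm M \<phi> (x k) powr p) powr (1/p))" .
  have "real n \<le> K * (\<Sum>k=1..n. orlicz_norm M \<phi> (x k) powr p) powr (1/p)"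
    using I K by (subst (asm) ennreal_le_iff) auto
  also have "\<dots> \<le> K * (real n * 2 powr p) powr (1/p)"
  proof -
    have "(\<Sum>k=1..n. orlicz_norm M \<phi> (x k) powr p) \<le> real (card {1..n}) * 2 powr p"
      by (rule sum_bounded_above) (use xn p in \<open>auto intro: powr_mono2\<close>)
    then have "(\<Sum>k=1..n. orlicz_norm M \<phi> (x k) powr p) \<le> real n * 2 powr p" by simp
    then have "(\<Sum>k=1..n. orlicz_norm M \<phi> (x k) powr p) powr (1/p) \<le> (real n * 2 powr p) powr (1/p)"
      using p by (intro powr_mono2) (auto intro: sum_nonneg)
    then show ?thesis using K by simp
  qed
  finally show ?thesis .
qed



lemma good_from_sets:
  fixes M :: "'a measure" and A :: "nat \<Rightarrow> 'a set"
  assumes orl: "orlicz_function \<phi>" and u: "0 < u" and gap: "2^(n+1) * \<phi> u \<le> \<phi> (2*u)"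
    and A: "\<forall>j<2^n. A j \<in> sets M \<and> emeasure M (A j) < \<infinity> \<and> 1 / \<phi> (2*u) \<le> measure M (A j)
              \<and> measure M (A j) \<le> 2 / \<phi> (2*u)"
    and dA: "disjoint_family_on A {..<2^n}"
  shows "good M \<phi> n"
  unfolding good_def
proof (intro exI[of _ "2*u"] conjI exI[of _ A] allI impI)
  note ob = orl_basic[OF orl]
  have p2: "0 < \<phi> (2*u)" using ob(5) u by simp
  have pu: "0 \<le> \<phi> u" using ob(2) u by simp
  show "0 < 2*u" using u by simp
  show "disjoint_family_on A {..<2^n}" by (rule dA)
  fix j :: nat assume j: "j < 2^n"
  show "A j \<in> sets M" "emeasure M (A j) < \<infinity>" using A j by auto
  have "1 / \<phi> (2*u) \<le> measure M (A j)" using A j by auto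
  then show "1 \<le> \<phi> (2*u) * measure M (A j)" using p2 by (simp add: divide_le_eq mult.commute)
next
  note ob = orl_basic[OF orl]
  have p2: "0 < \<phi> (2*u)" using ob(5) u by simp
  have pu: "0 \<le> \<phi> u" using ob(2) u by simp
  have "(\<Sum>j<2^n. measure M (A j)) \<le> real (card {..<(2::nat)^n}) * (2 / \<phi> (2*u))"
    by (rule sum_bounded_above) (use A in auto)
  then have S: "(\<Sum>j<2^n. measure M (A j)) \<le> 2^n * (2 / \<phi> (2*u))" by simp
  have "\<phi> u * (\<Sum>j<2^n. measure M (A j)) \<le> \<phi> u * (2^n * (2 / \<phi> (2*u)))"
    by (rule mult_left_mono[OF S pu])
  then have "\<phi> (2*u/2) * (\<Sum>j<2^n. measure M (A j)) \<le> \<phi> u * (2^n * (2 / \<phi> (2*u)))"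
    by simp
  also have "\<dots> = (2^(n+1) * \<phi> u) / \<phi> (2*u)" by (simp add: field_simps)
  also have "\<dots> \<le> 1" using gap p2 by simp
  finally show "\<phi> (2*u/2) * (\<Sum>j<2^n. measure M (A j)) \<le> 1" .
qed

lemma good_nonatomic:
  fixes M :: "'a measure"
  assumes orl: "orlicz_function \<phi>" and na: "nonatomic M" and u: "0 < u"
    and gap: "2^(n+1) * \<phi> u \<le> \<phi> (2*u)"
    and E: "E \<in> fmeasurable M" and big: "2 * (1 / \<phi> (2*u)) * real ((2::nat)^n) \<le> measure M E"
  shows "good M \<phi> n"
proof -
  note ob = orl_basic[OF orl]
  have p2: "0 < \<phi> (2*u)" using ob(5) u by simp
  have a: "0 < 1 / \<phi> (2*u)" using p2 by simp
  obtain A :: "nat \<Rightarrow> 'a set" where A: "\<forall>j<2^n. A j \<in> sets M \<and> A j \<subseteq> E \<and> 1 / \<phi> (2*u) \<le> measure M (A j)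
      \<and> measure M (A j) \<le> 2 * (1 / \<phi> (2*u))" and dA: "disjoint_family_on A {..<2^n}"
    using pieces[OF na E a big] by blast
  show ?thesis
  proof (rule good_from_sets[OF orl u gap _ dA], intro allI impI conjI)
    fix j :: nat assume j: "j < 2^n"
    show "A j \<in> sets M" "1 / \<phi> (2*u) \<le> measure M (A j)" using A j by auto
    show "measure M (A j) \<le> 2 / \<phi> (2*u)" using A j by auto
    have "emeasure M (A j) \<le> emeasure M E" using A j E by (intro emeasure_mono) auto
    also have "\<dots> < \<infinity>" using fmeasurableD2[OF E] by (simp add: less_top)
    finally show "emeasure M (A j) < \<infinity>" .
  qed
qed

lemma gap_pos:
  assumes orl: "orlicz_function \<phi>" and "0 \<le> u" and "K * \<phi> u < \<phi> (2*u)"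
  shows "0 < u"
proof (rule ccontr)
  assume "\<not> 0 < u"
  then have "u = 0" using assms(2) by simp
  then show False using assms(3) orl_basic(1)[OF orl] by simp
qed

lemma good_caseA:
  fixes M :: "'a measure"
  assumes orl: "orlicz_function \<phi>" and ms: "measure_setting CaseA M" and nd: "\<not> delta2 CaseA \<phi>"
  shows "good M \<phi> n"
proof -
  have na: "nonatomic M" and sf: "sigma_finite_measure M" and inf: "emeasure M (space M) = \<infinity>"
    using ms by (auto simp: measure_setting_def)
  have nd': "\<not> (\<exists>K>0. \<forall>u\<ge>0. \<phi> (2*u) \<le> K * \<phi> u)" using nd by (simp add: delta2_def)
  have "\<exists>u\<ge>0. \<not> \<phi> (2*u) \<le> 2^(n+1) * \<phi> u"
  proof (rule ccontr)
    assume "\<not> (\<exists>u\<ge>0. \<not> \<phi> (2*u) \<le> 2^(n+1) * \<phi> u)"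
    then have "\<forall>u\<ge>0. \<phi> (2*u) \<le> 2^(n+1) * \<phi> u" by blast
    moreover have "(0::real) < 2^(n+1)" by simp
    ultimately show False using nd' by blast
  qed
  then obtain u where u0: "0 \<le> u" and "\<not> \<phi> (2*u) \<le> 2^(n+1) * \<phi> u" by blast
  then have gap': "2^(n+1) * \<phi> u < \<phi> (2*u)" by simp
  have u: "0 < u" by (rule gap_pos[OF orl u0 gap'])
  have gap: "2^(n+1) * \<phi> u \<le> \<phi> (2*u)" using gap' by simp
  define b where "b = 2 * (1 / \<phi> (2*u)) * real ((2::nat)^n)"
  obtain F :: "nat \<Rightarrow> 'a set" where F: "range F \<subseteq> sets M" "(\<Union>i. F i) = space M"
    "\<And>i. emeasure M (F i) \<noteq> \<infinity>" "incseq F"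
    using sigma_finite_measure.sigma_finite_incseq[OF sf] by metis
  have "(SUP i. emeasure M (F i)) = emeasure M (\<Union>i. F i)"
    by (rule SUP_emeasure_incseq[OF F(1) F(4)])
  also have "\<dots> = \<infinity>" using F(2) inf by simp
  finally have sup: "(SUP i. emeasure M (F i)) = \<infinity>" .
  have "ennreal b < (SUP i. emeasure M (F i))" unfolding sup by simp
  then obtain i where i: "ennreal b < emeasure M (F i)" unfolding less_SUP_iff by blast
  have Fi: "F i \<in> sets M" using F(1) by auto
  have Ef: "F i \<in> fmeasurable M" using fmeasurableI[OF Fi] F(3)[of i] by (simp add: less_top)
  then have "emeasure M (F i) = ennreal (measure M (F i))" by (simp add: emeasure_eq_measure2)
  have p2: "0 < \<phi> (2*u)" using orl_basic(5)[OF orl] u by simp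
  have b0: "0 \<le> b" unfolding b_def using p2 by simp
  then have "b < measure M (F i)" using i \<open>emeasure M (F i) = ennreal (measure M (F i))\<close>
    by (simp add: ennreal_less_iff)
  then show ?thesis using good_nonatomic[OF orl na u gap Ef] b_def by simp
qed

lemma good_caseB:
  fixes M :: "'a measure"
  assumes orl: "orlicz_function \<phi>" and ms: "measure_setting CaseB M" and nd: "\<not> delta2 CaseB \<phi>"
  shows "good M \<phi> n"
proof -
  note ob = orl_basic[OF orl]
  have na: "nonatomic M" and pos: "0 < emeasure M (space M)" and fin: "emeasure M (space M) < \<infinity>"
    using ms by (auto simp: measure_setting_def)
  have Ef: "space M \<in> fmeasurable M" using fin by (auto intro: fmeasurableI)
  define T0 where "T0 = measure M (space M)"
  have eT: "emeasure M (space M) = ennreal T0" using Ef by (simp add: emeasure_eq_measure2 T0_def)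
  have T0: "0 < T0" using pos eT by (simp add: ennreal_less_iff)
  define B where "B = 2 * real ((2::nat)^n) / T0"
  have "eventually (\<lambda>x. B \<le> \<phi> x) at_top"
    using orl unfolding orlicz_function_def by (auto simp: filterlim_at_top)
  then obtain v0 where v0: "\<And>x. v0 \<le> x \<Longrightarrow> B \<le> \<phi> x" by (auto simp: eventually_at_top_linorder)
  define v where "v = max v0 0"
  have nd': "\<not> (\<exists>K>0. \<exists>v\<ge>0. \<forall>u\<ge>v. \<phi> (2*u) \<le> K * \<phi> u)" using nd by (simp add: delta2_def)
  have v00: "0 \<le> v" by (simp add: v_def)
  have "\<exists>u\<ge>v. \<not> \<phi> (2*u) \<le> 2^(n+1) * \<phi> u"
  proof (rule ccontr)
    assume "\<not> (\<exists>u\<ge>v. \<not> \<phi> (2*u) \<le> 2^(n+1) * \<phi> u)"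
    then have "\<forall>u\<ge>v. \<phi> (2*u) \<le> 2^(n+1) * \<phi> u" by blast
    moreover have "(0::real) < 2^(n+1)" by simp
    ultimately show False using nd' v00 by blast
  qed
  then obtain u where uv: "v \<le> u" and "\<not> \<phi> (2*u) \<le> 2^(n+1) * \<phi> u" by blast
  then have gap': "2^(n+1) * \<phi> u < \<phi> (2*u)" by simp
  have u0: "0 \<le> u" using uv by (simp add: v_def)
  have u: "0 < u" by (rule gap_pos[OF orl u0 gap'])
  have gap: "2^(n+1) * \<phi> u \<le> \<phi> (2*u)" using gap' by simp
  have "B \<le> \<phi> (2*u)" using v0 uv u0 by (simp add: v_def)
  moreover have p2: "0 < \<phi> (2*u)" using ob(5) u by simp
  ultimately have "2 * (1 / \<phi> (2*u)) * real ((2::nat)^n) \<le> T0"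
    using T0 by (simp add: B_def field_simps)
  then show ?thesis using good_nonatomic[OF orl na u gap Ef] by (simp add: T0_def)
qed



lemma good_caseC:
  fixes M :: "'a measure"
  assumes orl: "orlicz_function \<phi>" and ms: "measure_setting CaseC M" and nd: "\<not> delta2 CaseC \<phi>"
  shows "good M \<phi> n"
proof -
  note ob = orl_basic[OF orl]
  define X where "X = space M"
  have MX: "M = count_space X" and inf: "infinite X"
    using ms by (auto simp: measure_setting_def X_def)
  have sM: "sets M = Pow X" by (subst MX) simp
  have eM: "emeasure M S = of_nat (card S)" if "S \<subseteq> X" "finite S" for S
    using that by (subst MX) simp
  have mM: "measure M S = real (card S)" if "S \<subseteq> X" for S
    using that by (subst MX) (simp add: Measure_Space.measure_count_space)
  have co: "continuous_on {0..} \<phi>" using orl by (simp add: orlicz_function_def)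
  then obtain d where d: "0 < d" and dd: "\<And>x'. x' \<in> {0..} \<Longrightarrow> dist x' 0 < d \<Longrightarrow> dist (\<phi> x') (\<phi> 0) < 1"
    unfolding continuous_on_iff by (metis atLeast_iff order_refl zero_less_one)
  define v where "v = d / 4"
  have v: "0 < v" using d by (simp add: v_def)
  have phv: "\<phi> (2 * v) < 1"
  proof -
    have "dist (\<phi> (2 * v)) (\<phi> 0) < 1" using dd[of "2 * v"] d by (simp add: v_def dist_real_def)
    moreover have "0 \<le> \<phi> (2 * v)" using ob(2) v by simp
    ultimately show ?thesis using ob(1) by (simp add: dist_real_def)
  qed
  have nd': "\<not> (\<exists>K>0. \<exists>v>0. \<forall>u. 0 \<le> u \<and> u \<le> v \<longrightarrow> \<phi> (2*u) \<le> K * \<phi> u)"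
    using nd by (simp add: delta2_def)
  have "\<exists>u. 0 \<le> u \<and> u \<le> v \<and> \<not> \<phi> (2*u) \<le> 2^(n+1) * \<phi> u"
  proof (rule ccontr)
    assume "\<not> (\<exists>u. 0 \<le> u \<and> u \<le> v \<and> \<not> \<phi> (2*u) \<le> 2^(n+1) * \<phi> u)"
    then have "\<forall>u. 0 \<le> u \<and> u \<le> v \<longrightarrow> \<phi> (2*u) \<le> 2^(n+1) * \<phi> u" by blast
    moreover have "(0::real) < 2^(n+1)" by simp
    ultimately show False using nd' v by blast
  qed
  then obtain u where u0: "0 \<le> u" and uv: "u \<le> v" and "\<not> \<phi> (2*u) \<le> 2^(n+1) * \<phi> u" by blast
  then have gap': "2^(n+1) * \<phi> u < \<phi> (2*u)" by simp
  have u: "0 < u" by (rule gap_pos[OF orl u0 gap'])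
  have gap: "2^(n+1) * \<phi> u \<le> \<phi> (2*u)" using gap' by simp
  have p2: "0 < \<phi> (2*u)" using ob(5) u by simp
  have "\<phi> (2*u) \<le> \<phi> (2 * v)" using ob(4) u uv by simp
  then have p21: "\<phi> (2*u) < 1" using phv by simp
  define a where "a = 1 / \<phi> (2*u)"
  have a1: "1 < a" using p2 p21 by (simp add: a_def)
  define q where "q = nat \<lceil>a\<rceil>"
  have qa: "a \<le> real q" unfolding q_def by linarith
  have qa2: "real q \<le> 2 * a" unfolding q_def using a1 by linarith
  have q1: "1 \<le> q" using qa a1 by simp
  obtain g :: "nat \<Rightarrow> 'a" where g: "inj g" "range g \<subseteq> X"
    using infinite_countable_subset[OF inf] by blast
  define A where "A j = g ` {j*q..<(j+1)*q}" for j
  have AX: "A j \<subseteq> X" for j using g(2) by (auto simp: A_def)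
  have Afin: "finite (A j)" for j by (simp add: A_def)
  have Acard: "card (A j) = q" for j
  proof -
    have "inj_on g {j*q..<(j+1)*q}" using g(1) by (rule inj_on_subset) simp
    then show ?thesis unfolding A_def by (simp add: card_image)
  qed
  have dA: "disjoint_family_on A {..<2^n}"
    unfolding disjoint_family_on_def
  proof (intro ballI impI)
    fix i j :: nat assume ij: "i \<in> {..<2^n}" "j \<in> {..<2^n}" "i \<noteq> j"
    have key: "A i \<inter> A j = {}" if "i < j" for i j
    proof -
      have "(i+1)*q \<le> j*q" using that by (intro mult_le_mono1) simp
      then show ?thesis unfolding A_def using g(1) by (auto simp: inj_eq)
    qed
    show "A i \<inter> A j = {}"
    proof (cases "i < j")
      case True then show ?thesis by (rule key)
    next
      case False
      then have "j < i" using ij(3) by simp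
      then show ?thesis using key[of j i] by blast
    qed
  qed
  show ?thesis
  proof (rule good_from_sets[OF orl u gap _ dA], intro allI impI conjI)
    fix j :: nat assume j: "j < 2^n"
    show "A j \<in> sets M" using AX sM by simp
    show "emeasure M (A j) < \<infinity>" using eM[OF AX Afin] by (simp add: of_nat_less_top)
    show "1 / \<phi> (2*u) \<le> measure M (A j)" using mM[OF AX] Acard qa by (simp add: a_def)
    show "measure M (A j) \<le> 2 / \<phi> (2*u)" using mM[OF AX] Acard qa2 by (simp add: a_def)
  qed
qed

theorem mainTheorem9:
  fixes M :: "'a measure" and s :: msetting and \<phi> :: "real \<Rightarrow> real" and p :: real
  assumes "measure_setting s M"
    and "1 < p" and "p \<le> 2"
    and "orlicz_function \<phi>"
    and "0 < alpha_idx s \<phi>"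
    and "orlicz_has_type M \<phi> p"
  shows "delta2 s \<phi>"
proof (rule ccontr)
  assume nd: "\<not> delta2 s \<phi>"
  note orl = assms(4)
  obtain K where K: "0 < K" and Tall: "\<forall>n::nat. \<forall>x::nat \<Rightarrow> 'a \<Rightarrow> real.
      (\<forall>k\<in>{1..n}. x k \<in> orlicz_space M \<phi>) \<longrightarrow>
      (\<integral>\<^sup>+ t\<in>{0..1}. ennreal (orlicz_norm M \<phi> (\<lambda>\<omega>. \<Sum>k=1..n. rademacher k t * x k \<omega>)) \<partial>lborel)
        \<le> ennreal (K * (\<Sum>k=1..n. orlicz_norm M \<phi> (x k) powr p) powr (1/p))"
    using assms(6) unfolding orlicz_has_type_def by blast
  have good: "good M \<phi> n" for n
  proof (cases s)
    case CaseA
    then show ?thesis using good_caseA[OF orl] assms(1) nd by simp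
  next
    case CaseB
    then show ?thesis using good_caseB[OF orl] assms(1) nd by simp
  next
    case CaseC
    then show ?thesis using good_caseC[OF orl] assms(1) nd by simp
  qed
  have p0: "0 < p" using assms(2) by simp
  have H: "real n \<le> K * (real n * 2 powr p) powr (1/p)" if "1 \<le> n" for n :: nat
    by (rule core_bound[OF orl p0 that good K spec[OF Tall, of n]])
  show False by (rule growth_contra[OF assms(2) K H])
qed

end
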